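(* Let $P$ be a proper Poisson prime ideal of $A$. Then for each $i=1,\dots,n-2$, either $s_i\notin P$ or $t_i\notin P$.
   Context: Let $n\ge 3$, $A=\mathbb{C}[x_1,\dots,x_n]$. Fix $s_1,t_1,\dots,s_{n-2},t_{n-2}\in A$ with each $t_i\ne 0$ and $s_i,t_i$ coprime, such that $s_1/t_1,\dots,s_{n-2}/t_{n-2}$ are algebraically independent over $\mathbb{C}$. $A$ carries the Poisson bracket $\{f,g\}=(t_1\cdots t_{n-2})^2\,\mathrm{Jac}(f,g,s_1/t_1,\dots,s_{n-2}/t_{n-2})$, where $\mathrm{Jac}$ denotes the Jacobian determinant (rows = gradients with respect to $x_1,\dots,x_n$). A Poisson prime ideal is a prime ideal $P$ with $\{P,A\}\subseteq P$; it is residually null if $\{a,b\}\in P$ for all $a,b\in A$, and proper if it is not residually null. *)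

theory Defs
  imports "HOL-Library.Poly_Mapping" "HOL-Computational_Algebra.Fraction_Field"
    "Jordan_Normal_Form.Determinant"
begin

text \<open>Polynomials in countably many variables x_0, x_1, ... over the complex numbers:
  monomials are finitely supported exponent vectors.\<close>
type_synonym mpoly = "(nat \<Rightarrow>\<^sub>0 nat) \<Rightarrow>\<^sub>0 complex"

text \<open>The ring A = C[x_0,...,x_{n-1}] as the set of polynomials in the first n variables.\<close>
definition polys :: "nat \<Rightarrow> mpoly set" where
  "polys n = {p. \<forall>m\<in>Poly_Mapping.keys p. Poly_Mapping.keys m \<subseteq> {..<n}}"

definition const_poly :: "complex \<Rightarrow> mpoly" where
  "const_poly c = Poly_Mapping.single 0 c"

definition pd :: "nat \<Rightarrow> mpoly \<Rightarrow> mpoly" where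
  "pd j p = (\<Sum>m\<in>Poly_Mapping.keys p. Poly_Mapping.single (m - Poly_Mapping.single j 1)
                              (of_nat (Poly_Mapping.lookup m j) * Poly_Mapping.lookup p m))"

definition dvd_in :: "nat \<Rightarrow> mpoly \<Rightarrow> mpoly \<Rightarrow> bool" where
  "dvd_in n d a \<longleftrightarrow> (\<exists>c\<in>polys n. a = d * c)"

definition coprime_in :: "nat \<Rightarrow> mpoly \<Rightarrow> mpoly \<Rightarrow> bool" where
  "coprime_in n a b \<longleftrightarrow>
     (\<forall>d\<in>polys n. dvd_in n d a \<and> dvd_in n d b \<longrightarrow> dvd_in n d 1)"

definition eval_fract :: "mpoly \<Rightarrow> (nat \<Rightarrow> mpoly fract) \<Rightarrow> mpoly fract" where
  "eval_fract F v = (\<Sum>m\<in>Poly_Mapping.keys F. Fract (const_poly (Poly_Mapping.lookup F m)) 1 *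
                        (\<Prod>i\<in>Poly_Mapping.keys m. v i ^ Poly_Mapping.lookup m i))"

definition alg_indep :: "nat \<Rightarrow> (nat \<Rightarrow> mpoly) \<Rightarrow> (nat \<Rightarrow> mpoly) \<Rightarrow> bool" where
  "alg_indep k s t \<longleftrightarrow>
     (\<forall>F\<in>polys k. F \<noteq> 0 \<longrightarrow> eval_fract F (\<lambda>i. Fract (s i) (t i)) \<noteq> 0)"

text \<open>The Poisson bracket {f,g} = (t_0...t_{n-3})^2 Jac(f,g,s_0/t_0,...,s_{n-3}/t_{n-3}).
  Since the gradient of s/t is (t grad s - s grad t)/t^2, multiplying the row of
  s_k/t_k by t_k^2 gives exactly the following polynomial determinant.\<close>
definition pbracket :: "nat \<Rightarrow> (nat \<Rightarrow> mpoly) \<Rightarrow> (nat \<Rightarrow> mpoly) \<Rightarrow> mpoly \<Rightarrow> mpoly \<Rightarrow> mpoly" where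
  "pbracket n s t f g = det (mat n n (\<lambda>(i, j).
      if i = 0 then pd j f
      else if i = 1 then pd j g
      else t (i - 2) * pd j (s (i - 2)) - s (i - 2) * pd j (t (i - 2))))"

definition ideal_in :: "nat \<Rightarrow> mpoly set \<Rightarrow> bool" where
  "ideal_in n I \<longleftrightarrow> I \<subseteq> polys n \<and> 0 \<in> I \<and> (\<forall>a\<in>I. \<forall>b\<in>I. a + b \<in> I) \<and>
      (\<forall>a\<in>polys n. \<forall>b\<in>I. a * b \<in> I)"

definition prime_ideal_in :: "nat \<Rightarrow> mpoly set \<Rightarrow> bool" where
  "prime_ideal_in n P \<longleftrightarrow> ideal_in n P \<and> P \<noteq> polys n \<and>
      (\<forall>a\<in>polys n. \<forall>b\<in>polys n. a * b \<in> P \<longrightarrow> a \<in> P \<or> b \<in> P)"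

definition poisson_prime :: "nat \<Rightarrow> (nat \<Rightarrow> mpoly) \<Rightarrow> (nat \<Rightarrow> mpoly) \<Rightarrow> mpoly set \<Rightarrow> bool" where
  "poisson_prime n s t P \<longleftrightarrow> prime_ideal_in n P \<and>
      (\<forall>p\<in>P. \<forall>a\<in>polys n. pbracket n s t p a \<in> P)"

definition residually_null :: "nat \<Rightarrow> (nat \<Rightarrow> mpoly) \<Rightarrow> (nat \<Rightarrow> mpoly) \<Rightarrow> mpoly set \<Rightarrow> bool" where
  "residually_null n s t P \<longleftrightarrow> (\<forall>a\<in>polys n. \<forall>b\<in>polys n. pbracket n s t a b \<in> P)"

end

theory Submission
  imports Defs
begin

lemma polys_add: "p \<in> polys n \<Longrightarrow> q \<in> polys n \<Longrightarrow> p + q \<in> polys n"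
proof -
  assume p: "p \<in> polys n" and q: "q \<in> polys n"
  show ?thesis unfolding polys_def
  proof (rule CollectI, rule ballI)
    fix m assume "m \<in> Poly_Mapping.keys (p + q)"
    then have "m \<in> Poly_Mapping.keys p \<or> m \<in> Poly_Mapping.keys q"
      using keys_add[of p q] by auto
    then show "Poly_Mapping.keys m \<subseteq> {..<n}" using p q unfolding polys_def by auto
  qed
qed

lemma polys_uminus: "p \<in> polys n \<Longrightarrow> - p \<in> polys n"
  unfolding polys_def by simp

lemma polys_diff: "p \<in> polys n \<Longrightarrow> q \<in> polys n \<Longrightarrow> p - q \<in> polys n"
proof -
  assume "p \<in> polys n" "q \<in> polys n"
  then have "p + - q \<in> polys n" by (intro polys_add polys_uminus)
  then show ?thesis by simp
qed

lemma polys_one: "1 \<in> polys n"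
  unfolding polys_def by simp

lemma polys_zero: "0 \<in> polys n"
  unfolding polys_def by simp

lemma polys_mult: "p \<in> polys n \<Longrightarrow> q \<in> polys n \<Longrightarrow> p * q \<in> polys n"
proof -
  assume p: "p \<in> polys n" and q: "q \<in> polys n"
  show ?thesis unfolding polys_def
  proof (rule CollectI, rule ballI)
    fix m assume "m \<in> Poly_Mapping.keys (p * q)"
    then obtain a b where ab: "m = a + b" "a \<in> Poly_Mapping.keys p" "b \<in> Poly_Mapping.keys q"
      using keys_mult[of p q] by auto
    have "Poly_Mapping.keys m \<subseteq> Poly_Mapping.keys a \<union> Poly_Mapping.keys b"
      unfolding ab(1) by (rule keys_add)
    moreover have "Poly_Mapping.keys a \<subseteq> {..<n}" using ab(2) p unfolding polys_def by auto
    moreover have "Poly_Mapping.keys b \<subseteq> {..<n}" using ab(3) q unfolding polys_def by auto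
    ultimately show "Poly_Mapping.keys m \<subseteq> {..<n}" by auto
  qed
qed

lemma polys_sum: "finite A \<Longrightarrow> (\<And>x. x \<in> A \<Longrightarrow> f x \<in> polys n) \<Longrightarrow> sum f A \<in> polys n"
  by (induction A rule: finite_induct) (auto intro: polys_add polys_zero)

lemma polys_prod: "finite A \<Longrightarrow> (\<And>x. x \<in> A \<Longrightarrow> f x \<in> polys n) \<Longrightarrow> prod f A \<in> polys n"
  by (induction A rule: finite_induct) (auto intro: polys_mult polys_one)

lemma keys_monom_minus: "Poly_Mapping.keys (m - Poly_Mapping.single j (1::nat)) \<subseteq> Poly_Mapping.keys m"
proof
  fix k assume "k \<in> Poly_Mapping.keys (m - Poly_Mapping.single j (1::nat))"
  then have "Poly_Mapping.lookup (m - Poly_Mapping.single j 1) k \<noteq> 0" by (simp add: in_keys_iff)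
  then have "Poly_Mapping.lookup m k \<noteq> 0" by (metis lookup_minus diff_0_eq_0)
  then show "k \<in> Poly_Mapping.keys m" by (simp add: in_keys_iff)
qed

lemma polys_single: "Poly_Mapping.keys m \<subseteq> {..<n} \<Longrightarrow> Poly_Mapping.single m c \<in> polys n"
  unfolding polys_def by simp

lemma polys_pd: "p \<in> polys n \<Longrightarrow> pd j p \<in> polys n"
  unfolding pd_def
proof -
  assume p: "p \<in> polys n"
  show "(\<Sum>m\<in>Poly_Mapping.keys p. Poly_Mapping.single (m - Poly_Mapping.single j 1)
       (of_nat (Poly_Mapping.lookup m j) * Poly_Mapping.lookup p m)) \<in> polys n"
  proof (rule polys_sum)
    show "finite (Poly_Mapping.keys p)" by simp
    fix m assume m: "m \<in> Poly_Mapping.keys p"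
    have "Poly_Mapping.keys m \<subseteq> {..<n}" using p m unfolding polys_def by blast
    then have "Poly_Mapping.keys (m - Poly_Mapping.single j 1) \<subseteq> {..<n}"
      using keys_monom_minus[of m j] by (rule order_trans[rotated])
    then show "Poly_Mapping.single (m - Poly_Mapping.single j 1)
       (of_nat (Poly_Mapping.lookup m j) * Poly_Mapping.lookup p m) \<in> polys n"
      by (rule polys_single)
  qed
qed

lemma ideal_sum: "ideal_in n P \<Longrightarrow> finite A \<Longrightarrow> (\<And>x. x \<in> A \<Longrightarrow> f x \<in> P) \<Longrightarrow> sum f A \<in> P"
proof -
  assume I: "ideal_in n P"
  have z: "0 \<in> P" and a: "\<And>a b. a \<in> P \<Longrightarrow> b \<in> P \<Longrightarrow> a + b \<in> P"
    using I unfolding ideal_in_def by auto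
  show "finite A \<Longrightarrow> (\<And>x. x \<in> A \<Longrightarrow> f x \<in> P) \<Longrightarrow> sum f A \<in> P"
    by (induction A rule: finite_induct) (auto intro: z a)
qed

lemma ideal_prod: "ideal_in n P \<Longrightarrow> finite A \<Longrightarrow> r \<in> A \<Longrightarrow> f r \<in> P
   \<Longrightarrow> (\<And>x. x \<in> A \<Longrightarrow> f x \<in> polys n) \<Longrightarrow> prod f A \<in> P"
proof -
  assume I: "ideal_in n P" and A: "finite A" "r \<in> A" "f r \<in> P" and f: "\<And>x. x \<in> A \<Longrightarrow> f x \<in> polys n"
  have mulP: "\<And>a b. a \<in> polys n \<Longrightarrow> b \<in> P \<Longrightarrow> a * b \<in> P" using I unfolding ideal_in_def by blast
  have pf: "prod f (A - {r}) \<in> polys n" using A f by (intro polys_prod) auto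
  have "prod f A = f r * prod f (A - {r})" using A by (simp add: prod.remove)
  also have "\<dots> = prod f (A - {r}) * f r" by (simp add: mult.commute)
  finally show ?thesis using mulP[OF pf A(3)] by simp
qed

theorem lemma2p12:
  fixes n :: nat and s t :: "nat \<Rightarrow> mpoly" and P :: "mpoly set"
  assumes "n \<ge> 3"
    and "\<forall>i<n-2. s i \<in> polys n \<and> t i \<in> polys n \<and> t i \<noteq> 0 \<and> coprime_in n (s i) (t i)"
    and "alg_indep (n - 2) s t"
    and "poisson_prime n s t P"
    and "\<not> residually_null n s t P"
  shows "\<forall>i<n-2. s i \<notin> P \<or> t i \<notin> P"
proof (intro allI impI, rule ccontr)
  fix i assume i: "i < n - 2" and "\<not> (s i \<notin> P \<or> t i \<notin> P)"
  then have sP: "s i \<in> P" and tP: "t i \<in> P" by auto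
  have I: "ideal_in n P" using assms(4) unfolding poisson_prime_def prime_ideal_in_def by auto
  have sub: "P \<subseteq> polys n" using I unfolding ideal_in_def by auto
  have mulP: "\<And>a b. a \<in> polys n \<Longrightarrow> b \<in> P \<Longrightarrow> a * b \<in> P" using I unfolding ideal_in_def by auto
  have addP: "\<And>a b. a \<in> P \<Longrightarrow> b \<in> P \<Longrightarrow> a + b \<in> P" using I unfolding ideal_in_def by auto
  have "pbracket n s t a b \<in> P" if a: "a \<in> polys n" and b: "b \<in> polys n" for a b
  proof -
    define M where "M = mat n n (\<lambda>(i, j).
      if i = 0 then pd j a
      else if i = 1 then pd j b
      else t (i - 2) * pd j (s (i - 2)) - s (i - 2) * pd j (t (i - 2)))"
    have ent: "M $$ (k, j) \<in> polys n" if "k < n" "j < n" for k j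
    proof -
      have e: "M $$ (k, j) = (if k = 0 then pd j a
      else if k = 1 then pd j b
      else t (k - 2) * pd j (s (k - 2)) - s (k - 2) * pd j (t (k - 2)))"
        using that unfolding M_def by simp
      show ?thesis
      proof (cases "k = 0 \<or> k = 1")
        case True then show ?thesis unfolding e using polys_pd[OF a] polys_pd[OF b] by auto
      next
        case False
        then have "k - 2 < n - 2" using that by auto
        then have st: "s (k-2) \<in> polys n" "t (k-2) \<in> polys n" using assms(2) by blast+
        show ?thesis unfolding e using False
          by (simp add: polys_diff polys_mult polys_pd st)
      qed
    qed
    have row: "M $$ (i+2, j) \<in> P" if "j < n" for j
    proof -
      have e: "M $$ (i+2, j) = pd j (s i) * t i + (- pd j (t i)) * s i"
        using that i unfolding M_def by (simp add: algebra_simps)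
      have ti: "t i \<in> polys n" and si: "s i \<in> polys n" using i assms(2) by auto
      have x: "pd j (s i) * t i \<in> P" by (rule mulP[OF polys_pd[OF si] tP])
      have y: "(- pd j (t i)) * s i \<in> P" by (rule mulP[OF polys_uminus[OF polys_pd[OF ti]] sP])
      show ?thesis unfolding e by (rule addP[OF x y])
    qed
    have dims: "dim_row M = n" "dim_col M = n" by (simp_all add: M_def)
    have dM: "det M = (\<Sum>p\<in>{p. p permutes {0..<n}}. signof p * (\<Prod>k=0..<n. M $$ (k, p k)))"
      unfolding det_def dims by simp
    have "det M \<in> P"
      unfolding dM
    proof (rule ideal_sum[OF I])
      show "finite {p. p permutes {0..<n}}" by (simp add: finite_permutations)
      fix p assume p: "p \<in> {p. p permutes {0..<n}}"
      then have pp: "p permutes {0..<n}" by simp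
      have img: "\<And>k. k < n \<Longrightarrow> p k < n" using permutes_in_image[OF pp] by auto
      have "i+2 < n" using i by auto
      have pr: "(\<Prod>k = 0..<n. M $$ (k, p k)) \<in> P"
      proof (rule ideal_prod[OF I, of _ "i+2"])
        show "finite {0..<n}" by simp
        show "i+2 \<in> {0..<n}" using \<open>i+2 < n\<close> by simp
        show "M $$ (i + 2, p (i + 2)) \<in> P" using row img \<open>i+2 < n\<close> by blast
        show "\<And>x. x \<in> {0..<n} \<Longrightarrow> M $$ (x, p x) \<in> polys n" using ent img by auto
      qed
      have "(signof p :: mpoly) \<in> polys n"
        unfolding sign_def by (cases "evenperm p") (simp_all add: polys_one polys_uminus)
      then show "signof p * (\<Prod>k = 0..<n. M $$ (k, p k)) \<in> P" using pr mulP by blast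
    qed
    then show ?thesis unfolding pbracket_def M_def .
  qed
  then have "residually_null n s t P" unfolding residually_null_def by blast
  then show False using assms(5) by blast
qed

end
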